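(* Let $m\in A^+$ be irreducible of degree $d$, let $f(u)\in\mathbb{F}_p[u]$ be monic irreducible with a root $\alpha$, and let $n_1,n_2\ge1$ be integers with $n_1\equiv n_2\pmod{q^d-1}$. Then $B_{n_1}^{\alpha}\equiv B_{n_2}^{\alpha}\pmod m$.
   Context: Let $q$ be a power of a prime $p$, $A=\mathbb{F}_q[T]$, and $A^+$ the set of monic polynomials in $A$. For integers $n\ge1$, $i\ge0$, set $s_i(n)=\sum_{a\in A^+,\ \deg a=i} a^n\in A$. Writing $n=\sum_j a_jq^j$ with $0\le a_j\le q-1$, let $l(n)=\sum_j a_j$; it is known that $s_i(n)=0$ whenever $i>l(n)/(q-1)$, so $C_n(u)=\sum_{i\ge0}s_i(n)u^i\in A[u]$. Define $B_n(u)=C_n(u)$ if $n\not\equiv 0\pmod{q-1}$, and $B_n(u)=C_n(u)/(1-u)=\sum_{i\ge0}\big(\sum_{j=0}^i s_j(n)\big)u^i$ if $n\equiv0\pmod{q-1}$ (this lies in $A[u]$ since $C_n(1)=0$ in that case). For $\alpha$ algebraic over $\mathbb{F}_p$, let $s=[\mathbb{F}_q(\alpha):\mathbb{F}_q]$ and let $\alpha_1,\dots,\alpha_s$ be the conjugates of $\alpha$ over $\mathbb{F}_q$; define $B_n^{\alpha}=N_{\mathbb{F}_{q^s}(T)/\mathbb{F}_q(T)}(B_n(\alpha))=\prod_{i=1}^s B_n(\alpha_i)\in A$. *)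

theory Defs
  imports "HOL-Algebra.Algebraic_Closure_Type"
begin

text \<open>The finite field F_q is a type 'a (finite field), q = card (UNIV :: 'a set);
 A = F_q[T] is 'a poly. Polynomials in u over A are 'a poly poly.
 An algebraic closure of F_q is 'a alg_closure, with embedding to_ac.\<close>

definition monic_poly :: "'a::field poly \<Rightarrow> bool" where
  "monic_poly a \<longleftrightarrow> lead_coeff a = 1"

definition s_sum :: "nat \<Rightarrow> nat \<Rightarrow> ('a::{finite,field}) poly" where
  "s_sum i n = (\<Sum>a\<in>{a :: 'a poly. monic_poly a \<and> degree a = i}. a ^ n)"

text \<open>C_n(u) = sum_i s_i(n) u^i; all terms with i > n vanish since l(n) <= n and q-1 >= 1
 (s_i(n) = 0 for i > l(n)/(q-1)).\<close>
definition C_poly :: "nat \<Rightarrow> ('a::{finite,field}) poly poly" where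
  "C_poly n = (\<Sum>i\<le>n. monom (s_sum i n :: 'a poly) i)"

text \<open>B_n(u) = C_n(u) if q-1 does not divide n; otherwise C_n(u)/(1-u) =
  sum_i (sum_{j<=i} s_j(n)) u^i.\<close>
definition B_poly :: "nat \<Rightarrow> ('a::{finite,field}) poly poly" where
  "B_poly n = (if \<not> (card (UNIV :: 'a set) - 1) dvd n then C_poly n
               else (\<Sum>i\<le>n. monom (\<Sum>j\<le>i. s_sum j n :: 'a poly) i))"

definition B_eval :: "nat \<Rightarrow> ('a::{finite,field}) alg_closure \<Rightarrow> 'a alg_closure poly" where
  "B_eval n \<beta> = poly (map_poly (map_poly to_ac) (B_poly n :: 'a poly poly)) [:\<beta>:]"

definition min_poly_Fq :: "('a::{finite,field}) alg_closure \<Rightarrow> 'a poly" where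
  "min_poly_Fq \<alpha> = (THE g. monic_poly g \<and> poly (map_poly to_ac g) \<alpha> = 0 \<and>
      (\<forall>h. h \<noteq> 0 \<longrightarrow> poly (map_poly to_ac h) \<alpha> = 0 \<longrightarrow> degree g \<le> degree h))"

definition conjugates_Fq :: "('a::{finite,field}) alg_closure \<Rightarrow> 'a alg_closure set" where
  "conjugates_Fq \<alpha> = {\<beta>. poly (map_poly to_ac (min_poly_Fq \<alpha>)) \<beta> = 0}"

definition B_norm :: "nat \<Rightarrow> ('a::{finite,field}) alg_closure \<Rightarrow> 'a poly" where
  "B_norm n \<alpha> = (THE b. map_poly to_ac b = (\<Prod>\<beta>\<in>conjugates_Fq \<alpha>. B_eval n \<beta>))"

text \<open>The prime field F_p inside F_q, and F_p[u] as polynomials with coefficients in it.\<close>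
definition prime_subfield :: "'a::field set" where
  "prime_subfield = range of_nat"

definition in_Fp_poly :: "'a::field poly \<Rightarrow> bool" where
  "in_Fp_poly f \<longleftrightarrow> (\<forall>i. coeff f i \<in> prime_subfield)"

definition irreducible_Fp :: "'a::field poly \<Rightarrow> bool" where
  "irreducible_Fp f \<longleftrightarrow> in_Fp_poly f \<and> degree f \<ge> 1 \<and>
     (\<forall>g h. in_Fp_poly g \<longrightarrow> in_Fp_poly h \<longrightarrow> f = g * h \<longrightarrow> degree g = 0 \<or> degree h = 0)"

end

theory Submission imports Defs "HOL-Number_Theory.Number_Theory" "HOL-Algebra.Sylow"
begin

definition Wp :: "nat \<Rightarrow> ('a::zero) poly set" where
  "Wp i = {b. \<forall>j\<ge>i. coeff b j = 0}"

lemma Wp_0: "Wp 0 = {0}"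
  by (auto simp: Wp_def poly_eq_iff)

lemma Wp_Suc: "Wp (Suc i) = (\<lambda>(c,b). monom c i + b) ` (UNIV \<times> Wp i :: ('a::comm_ring_1 \<times> _) set)"
proof (intro equalityI subsetI)
  fix x :: "'a poly" assume x: "x \<in> Wp (Suc i)"
  have "x - monom (coeff x i) i \<in> Wp i"
    using x by (auto simp: Wp_def coeff_monom)
  then show "x \<in> (\<lambda>(c,b). monom c i + b) ` (UNIV \<times> Wp i)"
    by (intro image_eqI[of _ _ "(coeff x i, x - monom (coeff x i) i)"]) auto
next
  fix x :: "'a poly" assume "x \<in> (\<lambda>(c,b). monom c i + b) ` (UNIV \<times> Wp i)"
  then show "x \<in> Wp (Suc i)" by (auto simp: Wp_def coeff_monom)
qed

lemma Wp_Suc_inj: "inj_on (\<lambda>(c,b). monom c i + (b::'a::comm_ring_1 poly)) (UNIV \<times> Wp i)"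
proof (rule inj_onI, clarify)
  fix c b c' b' assume b: "b \<in> Wp i" and b': "b' \<in> Wp i"
    and e: "monom c i + b = monom c' i + (b' :: 'a poly)"
  have "coeff (monom c i + b) i = coeff (monom c' i + b') i" using e by simp
  then have "c = c'" using b b' by (simp add: Wp_def)
  with e show "c = c' \<and> b = b'" by simp
qed

lemma finite_Wp: "finite (Wp i :: ('a::{finite,comm_ring_1}) poly set)"
  by (induction i) (auto simp: Wp_0 Wp_Suc)

lemma card_Wp: "card (Wp i :: ('a::{finite,comm_ring_1}) poly set) = card (UNIV::'a set) ^ i"
proof (induction i)
  case 0 then show ?case by (simp add: Wp_0)
next
  case (Suc i)
  have "card (Wp (Suc i) :: 'a poly set) = card (UNIV \<times> (Wp i :: 'a poly set) :: ('a \<times> 'a poly) set)"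
    unfolding Wp_Suc using card_image[OF Wp_Suc_inj[of i, where 'a='a]] by simp
  also have "\<dots> = card (UNIV::'a set) * card (Wp i :: 'a poly set)" by (simp add: card_cartesian_product)
  finally show ?case using Suc by simp
qed

lemma sum_Wp_Suc:
  "(\<Sum>b\<in>Wp (Suc i). g b) = (\<Sum>c\<in>UNIV. \<Sum>b\<in>Wp i. g (monom c i + (b::('a::{finite,comm_ring_1}) poly)))"
proof -
  have "(\<Sum>b\<in>Wp (Suc i). g b) = (\<Sum>x\<in>UNIV \<times> Wp i. g ((\<lambda>(c,b). monom c i + b) x))"
    unfolding Wp_Suc by (rule sum.reindex[OF Wp_Suc_inj, unfolded comp_def])
  also have "\<dots> = (\<Sum>c\<in>UNIV. \<Sum>b\<in>Wp i. g (monom c i + b))"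
    by (simp add: sum.cartesian_product split_def)
  finally show ?thesis .
qed

lemma of_nat_card_0: "(of_nat (card (UNIV::'a set)) :: ('a::{finite,field})) = 0"
  by (simp add: of_nat_eq_0_iff_char_dvd CHAR_dvd_CARD)

lemma of_nat_card_poly_0: "(of_nat (card (UNIV::'a set)) :: ('a::{finite,field}) poly) = 0"
  by (subst of_nat_poly) (simp add: of_nat_card_0)

lemma vanish:
  "k < i \<Longrightarrow> (\<Sum>b\<in>Wp i. (e + b) ^ k) = (0 :: ('a::{finite,field}) poly)"
proof (induction i arbitrary: e k)
  case 0 then show ?case by simp
next
  case (Suc i)
  have bin: "\<And>x y::'a poly. (x + y)^k = (\<Sum>l\<le>k. of_nat (k choose l) * x^l * y^(k-l))"
    by (rule binomial_ring)
  have "(\<Sum>b\<in>Wp (Suc i). (e + b) ^ k)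
      = (\<Sum>c\<in>UNIV. \<Sum>b\<in>Wp i. (monom c i + (e + b)) ^ k)"
    by (simp add: sum_Wp_Suc add_ac)
  also have "\<dots> = (\<Sum>c\<in>UNIV. \<Sum>b\<in>Wp i. \<Sum>l\<le>k. of_nat (k choose l) * (monom c i) ^ l * (e + b) ^ (k - l))"
    by (simp only: bin)
  also have "\<dots> = (\<Sum>c\<in>UNIV. \<Sum>l\<le>k. \<Sum>b\<in>Wp i. of_nat (k choose l) * (monom c i) ^ l * (e + b) ^ (k - l))"
    by (rule sum.cong[OF refl], rule sum.swap)
  also have "\<dots> = (\<Sum>l\<le>k. \<Sum>c\<in>UNIV. \<Sum>b\<in>Wp i. of_nat (k choose l) * (monom c i) ^ l * (e + b) ^ (k - l))"
    by (rule sum.swap)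
  also have "\<dots> = (\<Sum>l\<le>k. of_nat (k choose l) * (\<Sum>c\<in>UNIV. (monom c i) ^ l) * (\<Sum>b\<in>Wp i. (e + b) ^ (k - l)))"
    by (simp add: sum_distrib_left sum_distrib_right mult_ac)
  also have "\<dots> = 0"
  proof (rule sum.neutral, intro ballI)
    fix l assume l: "l \<in> {..k}"
    show "of_nat (k choose l) * (\<Sum>c\<in>UNIV. (monom c i) ^ l) * (\<Sum>b\<in>Wp i. (e + b) ^ (k - l)) = (0::'a poly)"
    proof (cases "l = 0")
      case True
      then show ?thesis by (simp add: of_nat_card_poly_0)
    next
      case False
      then have "k - l < i" using Suc.prems l by auto
      then show ?thesis using Suc.IH by simp
    qed
  qed
  finally show ?case .
qed


lemma monic_set:
  "{a :: ('a::field) poly. monic_poly a \<and> degree a = i} = (\<lambda>b. monom 1 i + b) ` Wp i"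
proof (intro equalityI subsetI)
  fix a :: "'a poly" assume "a \<in> {a. monic_poly a \<and> degree a = i}"
  then have a: "lead_coeff a = 1" "degree a = i" by (auto simp: monic_poly_def)
  have "a - monom 1 i \<in> Wp i"
    unfolding Wp_def
  proof (safe)
    fix j assume "i \<le> j"
    then show "coeff (a - monom 1 i) j = 0"
      using a by (cases "j = i") (auto simp: coeff_monom coeff_eq_0)
  qed
  then show "a \<in> (\<lambda>b. monom 1 i + b) ` Wp i"
    by (intro image_eqI[of _ _ "a - monom 1 i"]) auto
next
  fix a :: "'a poly" assume "a \<in> (\<lambda>b. monom 1 i + b) ` Wp i"
  then obtain b where b: "b \<in> Wp i" and a: "a = monom 1 i + b" by auto
  have c: "coeff a i = 1" using b a by (simp add: Wp_def)
  have "degree a = i"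
  proof (rule antisym)
    show "degree a \<le> i"
      by (rule degree_le) (use b a in \<open>auto simp: Wp_def coeff_monom\<close>)
    show "i \<le> degree a" using c by (intro le_degree) simp
  qed
  with c show "a \<in> {a. monic_poly a \<and> degree a = i}" by (simp add: monic_poly_def)
qed

lemma s_sum_alt: "s_sum i n = (\<Sum>b\<in>Wp i. (monom 1 i + b) ^ n :: ('a::{finite,field}) poly)"
proof -
  have inj: "inj_on (\<lambda>b. monom 1 i + b) (Wp i :: 'a poly set)" by (rule inj_onI) simp
  show ?thesis unfolding s_sum_def monic_set by (simp add: sum.reindex[OF inj])
qed

lemma s_sum_vanish: "n < i \<Longrightarrow> s_sum i n = (0 :: ('a::{finite,field}) poly)"
  unfolding s_sum_alt by (rule vanish)

lemma ff_power_card_minus_1: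
  fixes x :: "'a :: {finite,field}"
  assumes "x \<noteq> 0"
  shows "x ^ (card (UNIV :: 'a set) - 1) = 1"
proof -
  have "(\<Prod>y\<in>UNIV-{0}. x * y) = x ^ (card (UNIV :: 'a set) - 1) * \<Prod>(UNIV-{0})"
    by (simp add: prod.distrib card_Diff_singleton)
  also have "(\<Prod>y\<in>UNIV-{0}. x * y) = (\<Prod>y\<in>UNIV-{0}. y)"
    by (rule prod.reindex_bij_witness[of _ "\<lambda>y. y / x" "\<lambda>y. x * y"]) (use assms in auto)
  finally have "1 * \<Prod>(UNIV-{0::'a}) = x ^ (card (UNIV :: 'a set) - 1) * \<Prod>(UNIV-{0::'a})" by simp
  moreover have "\<Prod>(UNIV-{0::'a}) \<noteq> 0" by (subst prod_zero_iff) auto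
  ultimately show ?thesis by (metis mult_right_cancel)
qed

lemma ff_power_dvd:
  fixes x :: "'a :: {finite,field}"
  assumes "x \<noteq> 0" "(card (UNIV :: 'a set) - 1) dvd n"
  shows "x ^ n = 1"
proof -
  obtain t where "n = (card (UNIV :: 'a set) - 1) * t" using assms(2) by blast
  then show ?thesis by (simp only: power_mult ff_power_card_minus_1[OF assms(1)] power_one)
qed

lemma ff_power_card: "(x :: 'a :: {finite,field}) ^ card (UNIV :: 'a set) = x"
proof (cases "x = 0")
  case True
  then show ?thesis by (simp add: finite_UNIV_card_ge_0)
next
  case False
  have "card (UNIV :: 'a set) = Suc (card (UNIV :: 'a set) - 1)"
    using finite_UNIV_card_ge_0[where 'a='a] by simp
  then have "x ^ card (UNIV :: 'a set) = x * x ^ (card (UNIV :: 'a set) - 1)"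
    by (metis power_Suc)
  then show ?thesis using ff_power_card_minus_1[OF False] by simp
qed

lemma of_nat_card_minus_1_poly: "(of_nat (card (UNIV :: 'a set) - 1) :: ('a::{finite,field}) poly) = -1"
proof -
  have "1 \<le> card (UNIV :: 'a set)" using finite_UNIV_card_ge_0[where 'a='a] by simp
  then show ?thesis by (simp add: of_nat_diff of_nat_card_poly_0)
qed

definition Tsum :: "nat \<Rightarrow> nat \<Rightarrow> ('a::{finite,field}) poly" where
  "Tsum n j = (\<Sum>b\<in>Wp j. b ^ n)"

lemma Tsum_Suc:
  assumes "(card (UNIV :: 'a set) - 1) dvd n"
  shows "Tsum n (Suc j) = Tsum n j - (s_sum j n :: ('a::{finite,field}) poly)"
proof -
  have "Tsum n (Suc j) = (\<Sum>c\<in>UNIV. \<Sum>b\<in>Wp j. (monom c j + b) ^ n :: 'a poly)"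
    unfolding Tsum_def by (rule sum_Wp_Suc)
  also have "\<dots> = (\<Sum>c\<in>insert 0 (UNIV - {0}). \<Sum>b\<in>Wp j. (monom c j + b) ^ n :: 'a poly)"
    by (simp add: insert_UNIV)
  also have "\<dots> = Tsum n j + (\<Sum>c\<in>UNIV - {0}. \<Sum>b\<in>Wp j. (monom c j + b) ^ n :: 'a poly)"
    by (subst sum.insert) (auto simp: Tsum_def)
  also have "(\<Sum>c\<in>UNIV - {0}. \<Sum>b\<in>Wp j. (monom c j + b) ^ n :: 'a poly) = (\<Sum>c\<in>UNIV - {0::'a}. s_sum j n)"
  proof (rule sum.cong[OF refl])
    fix c :: 'a assume "c \<in> UNIV - {0}"
    then have c: "c \<noteq> 0" by simp
    have "(\<Sum>b\<in>Wp j. (monom c j + b) ^ n) = (\<Sum>b\<in>Wp j. (monom c j + smult c b) ^ n :: 'a poly)"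
      by (rule sum.reindex_bij_witness[of _ "smult c" "smult (inverse c)"])
         (use c in \<open>auto simp: Wp_def\<close>)
    also have "\<dots> = (\<Sum>b\<in>Wp j. (monom 1 j + b) ^ n)"
    proof (rule sum.cong[OF refl])
      fix b :: "'a poly"
      have "monom c j + smult c b = smult c (monom 1 j + b)" by (simp add: smult_add_right smult_monom)
      then show "(monom c j + smult c b) ^ n = (monom 1 j + b) ^ n"
        by (simp add: smult_power ff_power_dvd[OF c assms])
    qed
    finally show "(\<Sum>b\<in>Wp j. (monom c j + b) ^ n) = s_sum j n" by (simp add: s_sum_alt)
  qed
  also have "\<dots> = of_nat (card (UNIV :: 'a set) - 1) * s_sum j n"
    by (simp add: card_Diff_singleton)
  finally show ?thesis by (simp only: of_nat_card_minus_1_poly) simp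
qed

lemma partial_vanish:
  assumes "(card (UNIV :: 'a set) - 1) dvd n" "n \<ge> 1" "n \<le> i"
  shows "(\<Sum>j\<le>i. s_sum j n) = (0 :: ('a::{finite,field}) poly)"
proof -
  have "Tsum n N = Tsum n 0 - (\<Sum>j<N. s_sum j n :: 'a poly)" for N
    by (induction N) (simp_all add: Tsum_Suc[OF assms(1)])
  moreover have "Tsum n 0 = (0 :: 'a poly)" using assms(2) by (simp add: Tsum_def Wp_0)
  moreover have "Tsum n (Suc i) = (0 :: 'a poly)"
    unfolding Tsum_def using vanish[of n "Suc i" 0] assms(3) by simp
  ultimately show ?thesis by (metis lessThan_Suc_atMost diff_0 neg_equal_0_iff_equal)
qed


lemma Wp_iff: "b \<in> Wp d \<longleftrightarrow> b = 0 \<or> degree b < d"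
proof
  assume "b \<in> Wp d"
  then have "\<forall>j\<ge>d. coeff b j = 0" by (simp add: Wp_def)
  show "b = 0 \<or> degree b < d"
  proof (cases "b = 0")
    case False
    then have "coeff b (degree b) \<noteq> 0" by simp
    then show ?thesis using \<open>\<forall>j\<ge>d. coeff b j = 0\<close> by (meson not_le)
  qed simp
next
  assume "b = 0 \<or> degree b < d"
  then show "b \<in> Wp d" by (auto simp: Wp_def coeff_eq_0)
qed

lemma prime_not_dvd_prod:
  assumes "prime_elem (m :: 'b :: comm_semiring_1)" "finite R" "\<forall>b\<in>R. \<not> m dvd f b"
  shows "\<not> m dvd (\<Prod>b\<in>R. f b)"
  using assms(2,3)
proof (induction R rule: finite_induct)
  case empty then show ?case using assms(1) by (auto dest: prime_elem_not_unit)
next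
  case (insert x F)
  then show ?case using prime_elem_dvd_mult_iff[OF assms(1)] by auto
qed

lemma euler_poly:
  fixes m a :: "('a::{finite,field}) poly"
  assumes irr: "irreducible m" and "\<not> m dvd a"
  shows "m dvd a ^ (card (UNIV :: 'a set) ^ degree m - 1) - 1"
proof -
  define d where "d = degree m"
  have pm: "prime_elem m" using irr by (rule field_poly_irreducible_imp_prime)
  have m0: "m \<noteq> 0" using irr by auto
  have dpos: "d > 0"
  proof (rule ccontr)
    assume "\<not> d > 0"
    then have "is_unit m" using m0 by (simp add: d_def is_unit_iff_degree)
    then show False using irr by (simp add: irreducible_def)
  qed
  define R where "R = Wp d - {0 :: 'a poly}"
  have finR: "finite R" unfolding R_def using finite_Wp by auto
  have cardR: "card R = card (UNIV :: 'a set) ^ d - 1"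
  proof -
    have "(0::'a poly) \<in> Wp d" by (simp add: Wp_def)
    then show ?thesis unfolding R_def using card_Diff_singleton[of "0::'a poly" "Wp d"] card_Wp[of d, where 'a='a] by simp
  qed
  have nd: "\<not> m dvd b" if "b \<in> R" for b
  proof
    assume "m dvd b"
    moreover have "b \<noteq> 0" "degree b < d" using that by (auto simp: R_def Wp_iff)
    ultimately show False using dvd_imp_degree_le[of m b] by (simp add: d_def)
  qed
  define f where "f b = (a * b) mod m" for b
  have fR: "f b \<in> R" if "b \<in> R" for b
  proof -
    have "f b \<noteq> 0"
    proof
      assume "f b = 0"
      then have "m dvd a * b" by (simp add: f_def mod_eq_0_iff_dvd)
      then show False using prime_elem_dvd_mult_iff[OF pm] assms(2) nd[OF that] by auto
    qed
    moreover then have "degree (f b) < d" unfolding f_def d_def by (rule degree_mod_less'[OF m0])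
    ultimately show ?thesis by (simp add: R_def Wp_iff)
  qed
  have inj: "inj_on f R"
  proof (rule inj_onI)
    fix x y assume x: "x \<in> R" and y: "y \<in> R" and e: "f x = f y"
    then have "m dvd a * x - a * y" by (simp add: f_def mod_eq_dvd_iff)
    then have "m dvd a * (x - y)" by (simp add: right_diff_distrib)
    then have "m dvd x - y" using prime_elem_dvd_mult_iff[OF pm] assms(2) by auto
    moreover have "x - y \<in> Wp d" using x y by (auto simp: R_def Wp_def)
    ultimately have "x - y = 0"
    proof (rule_tac ccontr)
      assume dv: "m dvd x - y" and w: "x - y \<in> Wp d" and ne: "x - y \<noteq> 0"
      then have "degree (x - y) < d" by (simp add: Wp_iff)
      moreover have "degree m \<le> degree (x - y)" using dvd_imp_degree_le[OF dv ne] .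
      ultimately show False by (simp add: d_def)
    qed
    then show "x = y" by simp
  qed
  have img: "f ` R = R" by (rule endo_inj_surj[OF finR _ inj]) (use fR in auto)
  have "(\<Prod>b\<in>R. f b) = (\<Prod>b\<in>R. b)"
    using prod.reindex[OF inj, of id] img by simp
  then have "(\<Prod>b\<in>R. f b) mod m = (\<Prod>b\<in>R. b) mod m" by simp
  moreover have "(\<Prod>b\<in>R. f b) mod m = (\<Prod>b\<in>R. a * b) mod m"
    unfolding f_def by (rule mod_prod_eq)
  moreover have "(\<Prod>b\<in>R. a * b) = a ^ card R * (\<Prod>b\<in>R. b)"
    by (simp add: prod.distrib)
  ultimately have "m dvd a ^ card R * (\<Prod>b\<in>R. b) - (\<Prod>b\<in>R. b)"
    by (simp add: mod_eq_dvd_iff)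
  then have "m dvd (a ^ card R - 1) * (\<Prod>b\<in>R. b)" by (simp add: left_diff_distrib)
  moreover have "\<not> m dvd (\<Prod>b\<in>R. b)" using prime_not_dvd_prod[OF pm finR] nd by auto
  ultimately have "m dvd a ^ card R - 1" using prime_elem_dvd_mult_iff[OF pm] by auto
  then show ?thesis using cardR by (simp add: d_def)
qed

lemma pow_cong_poly:
  fixes m a :: "('a::{finite,field}) poly"
  assumes irr: "irreducible m" and n1: "n1 \<ge> 1" and n2: "n2 \<ge> 1"
    and e: "n1 mod (card (UNIV :: 'a set) ^ degree m - 1) = n2 mod (card (UNIV :: 'a set) ^ degree m - 1)"
  shows "m dvd a ^ n1 - a ^ n2"
proof (cases "m dvd a")
  case True
  have "m dvd a ^ n" if n1': "n \<ge> 1" for n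
  proof -
    obtain k where "n = Suc k" using n1' by (cases n) auto
    then show ?thesis using True by (simp add: dvd_mult2)
  qed
  then have "m dvd a ^ n1" "m dvd a ^ n2" using n1 n2 by auto
  then show ?thesis by (rule dvd_diff)
next
  case False
  define Q where "Q = card (UNIV :: 'a set) ^ degree m - 1"
  have h: "m dvd a ^ Q - 1" using euler_poly[OF irr False] by (simp add: Q_def)
  have red: "a ^ n mod m = a ^ (n mod Q) mod m" for n
  proof -
    have "a ^ Q mod m = 1 mod m" using h by (simp add: mod_eq_dvd_iff)
    then have "((a ^ Q) mod m) ^ (n div Q) mod m = (1 mod m) ^ (n div Q) mod m" by simp
    then have "(a ^ Q) ^ (n div Q) mod m = 1 mod m"
      by (simp only: power_mod power_one)
    then have "(a ^ Q) ^ (n div Q) mod m * a ^ (n mod Q) mod m = 1 mod m * a ^ (n mod Q) mod m"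
      by simp
    then have "(a ^ Q) ^ (n div Q) * a ^ (n mod Q) mod m = 1 * a ^ (n mod Q) mod m"
      by (simp only: mod_mult_left_eq)
    moreover have "a ^ n = (a ^ Q) ^ (n div Q) * a ^ (n mod Q)"
    proof -
      have "n = Q * (n div Q) + n mod Q" by simp
      then have "a ^ n = a ^ (Q * (n div Q) + n mod Q)" by (rule arg_cong)
      then show ?thesis by (simp only: power_add power_mult)
    qed
    ultimately show ?thesis by simp
  qed
  have "a ^ n1 mod m = a ^ n2 mod m" using red[of n1] red[of n2] e by (simp add: Q_def)
  then show ?thesis by (simp add: mod_eq_dvd_iff)
qed


lemma all_factors_imp_power:
  fixes n p :: nat
  assumes "n > 0" "\<And>r. prime r \<Longrightarrow> r dvd n \<Longrightarrow> r = p"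
  shows "\<exists>k. n = p ^ k"
  using assms
proof (induction n rule: less_induct)
  case (less n)
  show ?case
  proof (cases "n = 1")
    case True then show ?thesis by (intro exI[of _ 0]) simp
  next
    case False
    then obtain r where r: "prime r" "r dvd n" using prime_factor_nat by blast
    then have rp: "r = p" using less.prems by blast
    obtain n' where n': "n = r * n'" using r by blast
    have "n' < n" using n' less.prems(1) r prime_gt_1_nat by (cases "n' = 0") auto
    moreover have "n' > 0" using n' less.prems(1) by (cases "n' = 0") auto
    moreover have "r' = p" if "prime r'" "r' dvd n'" for r'
      using less.prems(2)[OF that(1)] that(2) n' by auto
    ultimately obtain k where "n' = p ^ k" using less.IH by blast
    then show ?thesis using n' rp by (intro exI[of _ "Suc k"]) simp
  qed
qed

lemma card_prime_power:
  "\<exists>k. card (UNIV :: ('a::{finite,field}) set) = CHAR('a) ^ k"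
proof (rule all_factors_imp_power)
  show "card (UNIV :: 'a set) > 0" by (simp add: finite_UNIV_card_ge_0)
next
  fix r assume r: "prime r" "r dvd card (UNIV :: 'a set)"
  define q where "q = card (UNIV :: 'a set)"
  define a where "a = multiplicity r q"
  have q0: "q > 0" by (simp add: q_def finite_UNIV_card_ge_0)
  obtain t where qt: "q = r ^ a * t"
    unfolding a_def using multiplicity_dvd by blast
  have a1: "a \<ge> 1" unfolding a_def
    by (rule multiplicity_geI) (use r q0 in \<open>auto simp: q_def\<close>)
  define G where "G = \<lparr> carrier = (UNIV :: 'a set), monoid.mult = (+), one = (0 :: 'a) \<rparr>"
  interpret group G
  proof (rule groupI)
    fix x assume x: "x \<in> carrier G"
    show "\<exists>y\<in>carrier G. y \<otimes>\<^bsub>G\<^esub> x = \<one>\<^bsub>G\<^esub>"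
      by (intro bexI[of _ "-x"]) (auto simp: G_def)
  qed (auto simp: G_def add_ac)
  have "Coset.order G = r ^ a * t" by (simp add: Coset.order_def G_def qt[unfolded q_def])
  then obtain H where H: "subgroup H G" "card H = r ^ a"
    using sylow_thm[OF r(1) is_group, of a t] by (auto simp: G_def)
  have "r \<le> r ^ a" using power_increasing[OF a1, of r] prime_gt_1_nat[OF r(1)] by simp
  then have c2: "card H \<ge> 2" using H(2) prime_ge_2_nat[OF r(1)] by simp
  have "\<not> H \<subseteq> {0}"
  proof
    assume "H \<subseteq> {0}"
    then have "card H \<le> card {0::'a}" by (intro card_mono) auto
    then show False using c2 by simp
  qed
  then obtain x where x: "x \<in> H" "x \<noteq> 0" by blast
  interpret HG: group "G\<lparr>carrier := H\<rparr>" using subgroup.subgroup_is_group[OF H(1) is_group] .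
  have pw: "x [^]\<^bsub>G\<lparr>carrier := H\<rparr>\<^esub> n = of_nat n * x" for n
    by (induction n) (simp_all add: G_def algebra_simps)
  have "x [^]\<^bsub>G\<lparr>carrier := H\<rparr>\<^esub> Coset.order (G\<lparr>carrier := H\<rparr>) = \<one>\<^bsub>G\<lparr>carrier := H\<rparr>\<^esub>"
    by (rule HG.pow_order_eq_1) (simp add: x)
  then have "x [^]\<^bsub>G\<lparr>carrier := H\<rparr>\<^esub> (r ^ a) = \<one>\<^bsub>G\<lparr>carrier := H\<rparr>\<^esub>"
    using H(2) by (simp add: Coset.order_def)
  then have "of_nat (r ^ a) * x = 0" unfolding pw by (simp add: G_def)
  then have "of_nat (r ^ a) = (0::'a)" using x(2) by simp
  then have "CHAR('a) dvd r ^ a" by (simp only: of_nat_eq_0_iff_char_dvd)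
  moreover have "prime (CHAR('a))"
    using finite_imp_CHAR_pos[where 'a='a] prime_CHAR_semidom by simp
  ultimately have "CHAR('a) dvd r" using prime_dvd_power by blast
  then show "r = CHAR('a)" using r(1) \<open>prime (CHAR('a))\<close> primes_dvd_imp_eq by blast
qed


definition rhom :: "('c::comm_ring_1 \<Rightarrow> 'd::comm_ring_1) \<Rightarrow> bool" where
  "rhom \<phi> \<longleftrightarrow> \<phi> 0 = 0 \<and> \<phi> 1 = 1 \<and> (\<forall>x y. \<phi> (x + y) = \<phi> x + \<phi> y) \<and> (\<forall>x y. \<phi> (x * y) = \<phi> x * \<phi> y)"

lemma rhomD:
  assumes "rhom \<phi>"
  shows "\<phi> 0 = 0" "\<phi> 1 = 1" "\<phi> (x + y) = \<phi> x + \<phi> y" "\<phi> (x * y) = \<phi> x * \<phi> y"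
  using assms by (auto simp: rhom_def)

lemma rhom_uminus: "rhom \<phi> \<Longrightarrow> \<phi> (- x) = - \<phi> x"
proof -
  assume r: "rhom \<phi>"
  have "\<phi> x + \<phi> (- x) = 0" using rhomD(3)[OF r, of x "-x"] rhomD(1)[OF r] by simp
  then show ?thesis by (simp add: eq_neg_iff_add_eq_0 add.commute)
qed

lemma rhom_diff: "rhom \<phi> \<Longrightarrow> \<phi> (x - y) = \<phi> x - \<phi> y"
proof -
  assume r: "rhom \<phi>"
  show ?thesis using rhomD(3)[OF r, of x "-y"] rhom_uminus[OF r, of y] by simp
qed

lemma rhom_sum: "rhom \<phi> \<Longrightarrow> \<phi> (\<Sum>i\<in>A. f i) = (\<Sum>i\<in>A. \<phi> (f i))"
  by (induction A rule: infinite_finite_induct) (simp_all add: rhomD)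

lemma rhom_prod: "rhom \<phi> \<Longrightarrow> \<phi> (\<Prod>i\<in>A. f i) = (\<Prod>i\<in>A. \<phi> (f i))"
  by (induction A rule: infinite_finite_induct) (simp_all add: rhomD)

lemma rhom_power: "rhom \<phi> \<Longrightarrow> \<phi> (x ^ n) = \<phi> x ^ n"
  by (induction n) (simp_all add: rhomD)

lemma rhom_comp: "rhom \<phi> \<Longrightarrow> rhom \<psi> \<Longrightarrow> rhom (\<psi> \<circ> \<phi>)"
  by (simp add: rhom_def)

lemma rhom_map_poly: "rhom \<phi> \<Longrightarrow> rhom (map_poly \<phi>)"
  unfolding rhom_def
proof (intro conjI allI)
  assume h: "\<phi> 0 = 0 \<and> \<phi> 1 = 1 \<and> (\<forall>x y. \<phi> (x + y) = \<phi> x + \<phi> y) \<and> (\<forall>x y. \<phi> (x * y) = \<phi> x * \<phi> y)"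
  then have r: "rhom \<phi>" by (simp add: rhom_def)
  show "map_poly \<phi> 0 = 0" by simp
  show "map_poly \<phi> 1 = 1" using h by simp
  fix x y :: "'a poly"
  show "map_poly \<phi> (x + y) = map_poly \<phi> x + map_poly \<phi> y"
    by (rule poly_eqI) (simp add: coeff_map_poly h)
  show "map_poly \<phi> (x * y) = map_poly \<phi> x * map_poly \<phi> y"
    by (rule poly_eqI) (simp add: coeff_map_poly coeff_mult rhom_sum[OF r] h)
qed

lemma rhom_poly: "rhom (\<lambda>p. poly p x)"
  by (simp add: rhom_def)

lemma rhom_poly_map:
  assumes "rhom \<phi>"
  shows "\<phi> (poly p x) = poly (map_poly \<phi> p) (\<phi> x)"
proof (induction p)
  case 0 then show ?case by (simp add: rhomD[OF assms])
next
  case (pCons a p)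
  then show ?case by (simp add: map_poly_pCons rhomD[OF assms])
qed

lemma rhom_to_ac: "rhom to_ac"
  by (simp add: rhom_def)


lemma q1_dvd: "(q - 1) dvd (q ^ d - (1::nat))" if "q \<ge> 1"
proof -
  have "q mod (q - 1) = 1 mod (q - 1)"
    using that by (metis le_add_diff_inverse2 mod_add_self1 add.commute)
  then have "q ^ d mod (q - 1) = 1 mod (q - 1)"
    by (metis power_mod power_one)
  moreover have "q ^ d \<ge> 1" using that by simp
  ultimately show ?thesis using mod_eq_dvd_iff_nat by blast
qed

lemma coeff_sum_monom: "coeff (\<Sum>i\<le>n. monom (h i) i) j = (if j \<le> n then h j else 0)"
  by (simp add: coeff_sum coeff_monom)

definition gco :: "nat \<Rightarrow> nat \<Rightarrow> ('a::{finite,field}) poly" where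
  "gco n i = (if (card (UNIV :: 'a set) - 1) dvd n then (\<Sum>j\<le>i. s_sum j n) else s_sum i n)"

lemma coeff_B: "n \<ge> 1 \<Longrightarrow> coeff (B_poly n) i = (gco n i :: ('a::{finite,field}) poly)"
  unfolding B_poly_def gco_def C_poly_def
  by (auto simp: coeff_sum_monom s_sum_vanish partial_vanish)

lemma s_sum_cong:
  fixes m :: "('a::{finite,field}) poly"
  assumes irr: "irreducible m" and n1: "n1 \<ge> 1" and n2: "n2 \<ge> 1"
    and e: "n1 mod (card (UNIV :: 'a set) ^ degree m - 1) = n2 mod (card (UNIV :: 'a set) ^ degree m - 1)"
  shows "m dvd s_sum j n1 - s_sum j n2"
  unfolding s_sum_def by (simp only: sum_subtractf[symmetric]) (intro dvd_sum pow_cong_poly[OF assms])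

lemma gco_cong:
  fixes m :: "('a::{finite,field}) poly"
  assumes irr: "irreducible m" and n1: "n1 \<ge> 1" and n2: "n2 \<ge> 1"
    and e: "n1 mod (card (UNIV :: 'a set) ^ degree m - 1) = n2 mod (card (UNIV :: 'a set) ^ degree m - 1)"
  shows "m dvd gco n1 i - gco n2 i"
proof -
  define q where "q = card (UNIV :: 'a set)"
  have "q \<ge> 1" by (simp add: q_def finite_UNIV_card_ge_0 Suc_leI)
  then have "(q - 1) dvd (q ^ degree m - 1)" by (rule q1_dvd)
  then have "n1 mod (q - 1) = n2 mod (q - 1)"
    using e by (metis mod_mod_cancel q_def)
  then have iff: "(q - 1) dvd n1 \<longleftrightarrow> (q - 1) dvd n2" by (simp add: mod_eq_0_iff_dvd[symmetric])
  have sc: "m dvd s_sum j n1 - s_sum j n2" for j by (rule s_sum_cong[OF assms])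
  show ?thesis
  proof (cases "(q - 1) dvd n1")
    case True
    then show ?thesis unfolding gco_def using iff
      by (simp add: q_def sum_subtractf[symmetric] dvd_sum sc)
  next
    case False
    then show ?thesis unfolding gco_def using iff by (simp add: q_def sc)
  qed
qed

lemma B_decomp:
  fixes m :: "('a::{finite,field}) poly"
  assumes irr: "irreducible m" and n1: "n1 \<ge> 1" and n2: "n2 \<ge> 1"
    and e: "n1 mod (card (UNIV :: 'a set) ^ degree m - 1) = n2 mod (card (UNIV :: 'a set) ^ degree m - 1)"
  shows "B_poly n1 = B_poly n2 + [:m:] * map_poly (\<lambda>c. c div m) (B_poly n1 - B_poly n2)"
proof -
  have m0: "m \<noteq> 0" using irr by auto
  have "[:m:] * map_poly (\<lambda>c. c div m) (B_poly n1 - B_poly n2) = B_poly n1 - B_poly n2"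
  proof (rule poly_eqI)
    fix i
    have d: "m dvd coeff (B_poly n1 - B_poly n2) i"
      using gco_cong[OF assms, of i] coeff_B[OF n1, of i, where 'a='a] coeff_B[OF n2, of i, where 'a='a] by simp
    show "coeff ([:m:] * map_poly (\<lambda>c. c div m) (B_poly n1 - B_poly n2)) i = coeff (B_poly n1 - B_poly n2) i"
      using d m0 by (simp add: coeff_map_poly)
  qed
  then show ?thesis by simp
qed


definition Ev :: "('a::{finite,field}) alg_closure \<Rightarrow> 'a poly poly \<Rightarrow> 'a alg_closure poly" where
  "Ev \<beta> P = poly (map_poly (map_poly to_ac) P) [:\<beta>:]"

lemma rhom_Ev: "rhom (Ev \<beta>)"
proof -
  have "Ev \<beta> = (\<lambda>p. poly p [:\<beta>:]) \<circ> map_poly (map_poly to_ac)"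
    by (rule ext) (simp add: Ev_def)
  then show ?thesis
    using rhom_comp[OF rhom_map_poly[OF rhom_map_poly[OF rhom_to_ac]] rhom_poly] by simp
qed

lemma Ev_const: "Ev \<beta> [:m:] = map_poly to_ac m"
  by (simp add: Ev_def map_poly_pCons)

lemma B_eval_Ev: "B_eval n \<beta> = Ev \<beta> (B_poly n)"
  by (simp add: B_eval_def Ev_def)

lemma prod_dvd_diff:
  fixes cc :: "'b::comm_ring_1"
  assumes "\<forall>x\<in>S. cc dvd ff x - gg x"
  shows "cc dvd (\<Prod>x\<in>S. ff x) - (\<Prod>x\<in>S. gg x)"
proof (cases "finite S")
  case True
  then show ?thesis using assms
  proof (induction S rule: finite_induct)
    case empty then show ?case by simp
  next
    case (insert a F)
    have "(\<Prod>x\<in>insert a F. ff x) - (\<Prod>x\<in>insert a F. gg x)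
        = ff a * ((\<Prod>x\<in>F. ff x) - (\<Prod>x\<in>F. gg x)) + (ff a - gg a) * (\<Prod>x\<in>F. gg x)"
      using insert.hyps by (simp add: algebra_simps)
    moreover have "cc dvd ff a - gg a" using insert.prems by simp
    moreover have "cc dvd (\<Prod>x\<in>F. ff x) - (\<Prod>x\<in>F. gg x)" using insert by simp
    ultimately show ?case by (simp add: dvd_add dvd_mult dvd_mult2)
  qed
qed simp

definition frob :: "('a::{finite,field}) alg_closure \<Rightarrow> 'a alg_closure" where
  "frob x = x ^ card (UNIV :: 'a set)"

lemma card_ge_2: "card (UNIV :: ('a::{finite,field}) set) \<ge> 2"
proof -
  have "card {0::'a, 1} \<le> card (UNIV :: 'a set)" by (rule card_mono) auto
  then show ?thesis by simp
qed

lemma rhom_frob: "rhom (frob :: ('a::{finite,field}) alg_closure \<Rightarrow> _)"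
proof -
  obtain k where k: "card (UNIV :: 'a set) = CHAR('a) ^ k" using card_prime_power by blast
  have pr: "prime CHAR('a alg_closure)"
    using finite_imp_CHAR_pos[where 'a='a] prime_CHAR_semidom by simp
  have q0: "card (UNIV :: 'a set) > 0" by (simp add: finite_UNIV_card_ge_0)
  show ?thesis unfolding rhom_def frob_def
  proof (intro conjI allI)
    fix x y :: "'a alg_closure"
    show "(x + y) ^ card (UNIV :: 'a set) = x ^ card (UNIV :: 'a set) + y ^ card (UNIV :: 'a set)"
      by (rule freshmans_dream'[OF pr]) (simp add: k)
  qed (use q0 in \<open>simp_all add: power_mult_distrib\<close>)
qed

lemma frob_to_ac: "frob (to_ac c) = to_ac (c :: 'a::{finite,field})"
  by (simp add: frob_def ff_power_card flip: to_ac_power)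

lemma map_frob_to_ac: "map_poly frob (map_poly to_ac g) = map_poly to_ac (g :: ('a::{finite,field}) poly)"
  by (rule poly_eqI) (simp add: coeff_map_poly frob_to_ac rhomD[OF rhom_frob])

lemma frob_Ev: "map_poly frob (Ev \<beta> P) = Ev (frob \<beta>) P"
proof -
  have r: "rhom (map_poly (frob :: 'a alg_closure \<Rightarrow> _))" by (rule rhom_map_poly[OF rhom_frob])
  have "map_poly frob (Ev \<beta> P) = poly (map_poly (map_poly frob) (map_poly (map_poly to_ac) P)) (map_poly frob [:\<beta>:])"
    unfolding Ev_def by (rule rhom_poly_map[OF r])
  also have "map_poly (map_poly frob) (map_poly (map_poly to_ac) P) = map_poly (map_poly to_ac) P"
    by (rule poly_eqI) (simp add: coeff_map_poly map_frob_to_ac)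
  also have "map_poly frob [:\<beta>:] = [:frob \<beta>:]" by (simp add: map_poly_pCons rhomD[OF rhom_frob])
  finally show ?thesis by (simp add: Ev_def)
qed

lemma frob_inj: "inj (frob :: ('a::{finite,field}) alg_closure \<Rightarrow> _)"
proof (rule injI)
  fix x y :: "'a alg_closure" assume "frob x = frob y"
  then have "frob (x - y) = 0" by (simp add: rhom_diff[OF rhom_frob])
  then show "x = y" by (simp add: frob_def)
qed

lemma fixed_in_range:
  fixes x :: "('a::{finite,field}) alg_closure"
  assumes "frob x = x"
  shows "x \<in> range to_ac"
proof -
  define q where "q = card (UNIV :: 'a set)"
  have q2: "q \<ge> 2" unfolding q_def by (rule card_ge_2)
  define p :: "'a alg_closure poly" where "p = monom 1 q - [:0, 1:]"
  have "coeff [:0, 1::'a alg_closure:] q = 0" using q2 by (intro coeff_eq_0) simp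
  then have cq: "coeff p q = 1" by (simp add: p_def coeff_monom)
  then have p0: "p \<noteq> 0" by auto
  have dp: "degree p \<le> q"
    unfolding p_def using q2 by (intro degree_le) (auto simp: coeff_monom coeff_pCons split: nat.splits)
  define Z where "Z = {x. poly p x = 0}"
  have finZ: "finite Z" unfolding Z_def by (rule poly_roots_finite[OF p0])
  have cardZ: "card Z \<le> q" unfolding Z_def using card_poly_roots_bound[OF p0] dp by simp
  have polyp: "poly p y = y ^ q - y" for y by (simp add: p_def poly_monom)
  have sub: "range to_ac \<subseteq> Z"
    using frob_to_ac unfolding Z_def polyp frob_def q_def by auto
  have "card (range (to_ac :: 'a \<Rightarrow> _)) = q" unfolding q_def by (rule card_image[OF inj_to_ac])
  then have "range to_ac = Z" using card_subset_eq[OF finZ sub] card_mono[OF finZ sub] cardZ by simp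
  moreover have "x \<in> Z" using assms by (simp add: Z_def polyp frob_def q_def)
  ultimately show ?thesis by simp
qed

lemma inj_map_to_ac: "inj (map_poly (to_ac :: ('a::field) \<Rightarrow> _))"
proof (rule injI)
  fix a b :: "'a poly" assume "map_poly to_ac a = map_poly to_ac b"
  then have "coeff (map_poly to_ac a) i = coeff (map_poly to_ac b) i" for i by simp
  then show "a = b" by (intro poly_eqI) (simp add: coeff_map_poly)
qed

lemma norm_exists:
  fixes g :: "('a::{finite,field}) poly"
  defines "S \<equiv> {\<beta>. poly (map_poly to_ac g) \<beta> = 0}"
  shows "\<exists>b. map_poly to_ac b = (\<Prod>\<beta>\<in>S. Ev \<beta> P)"
proof (cases "finite S")
  case False
  then show ?thesis by (intro exI[of _ 1]) simp
next
  case True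
  have into: "frob ` S \<subseteq> S"
  proof
    fix y assume "y \<in> frob ` S"
    then obtain \<beta> where b: "\<beta> \<in> S" "y = frob \<beta>" by auto
    have "frob (poly (map_poly to_ac g) \<beta>) = poly (map_poly frob (map_poly to_ac g)) (frob \<beta>)"
      by (rule rhom_poly_map[OF rhom_frob])
    then have "poly (map_poly to_ac g) (frob \<beta>) = frob 0"
      using b(1) by (simp add: S_def map_frob_to_ac)
    then show "y \<in> S" using b by (simp add: S_def rhomD[OF rhom_frob])
  qed
  have injS: "inj_on frob S" using frob_inj by (rule inj_on_subset) simp
  have img: "frob ` S = S" by (rule endo_inj_surj[OF True into injS])
  define PP where "PP = (\<Prod>\<beta>\<in>S. Ev \<beta> P)"
  have "map_poly frob PP = (\<Prod>\<beta>\<in>S. map_poly frob (Ev \<beta> P))"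
    unfolding PP_def by (rule rhom_prod[OF rhom_map_poly[OF rhom_frob]])
  also have "\<dots> = (\<Prod>\<beta>\<in>S. Ev (frob \<beta>) P)" by (simp add: frob_Ev)
  also have "\<dots> = (\<Prod>\<beta>\<in>frob ` S. Ev \<beta> P)" by (simp add: prod.reindex[OF injS])
  also have "\<dots> = PP" by (simp add: img PP_def)
  finally have fx: "map_poly frob PP = PP" .
  have cin: "coeff PP i \<in> range to_ac" for i
  proof (rule fixed_in_range)
    have "coeff (map_poly frob PP) i = coeff PP i" using fx by simp
    then show "frob (coeff PP i) = coeff PP i" by (simp add: coeff_map_poly rhomD[OF rhom_frob])
  qed
  have "map_poly to_ac (map_poly of_ac PP) = PP"
    by (rule poly_eqI) (simp add: coeff_map_poly to_ac_of_ac[OF cin])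
  then show ?thesis unfolding PP_def by blast
qed

lemma B_norm_eq:
  assumes "map_poly to_ac b = (\<Prod>\<beta>\<in>conjugates_Fq \<alpha>. B_eval n \<beta>)"
  shows "B_norm n \<alpha> = b"
  unfolding B_norm_def
proof (rule the_equality)
  show "map_poly to_ac b = (\<Prod>\<beta>\<in>conjugates_Fq \<alpha>. B_eval n \<beta>)" by (rule assms)
next
  fix x assume "map_poly to_ac x = (\<Prod>\<beta>\<in>conjugates_Fq \<alpha>. B_eval n \<beta>)"
  then have "map_poly to_ac x = map_poly to_ac b" using assms by simp
  then show "x = b" by (rule injD[OF inj_map_to_ac])
qed

lemma descent:
  fixes m x :: "('a::field) poly"
  assumes m0: "m \<noteq> 0" and d: "map_poly to_ac m dvd map_poly to_ac x"
  shows "m dvd x"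
proof (rule ccontr)
  assume nd: "\<not> m dvd x"
  define r where "r = x mod m"
  have r0: "r \<noteq> 0" using nd by (simp add: r_def mod_eq_0_iff_dvd)
  have dr: "degree r < degree m" using degree_mod_less'[OF m0 r0[unfolded r_def]] by (simp add: r_def)
  have "x = m * (x div m) + r" by (simp add: r_def)
  then have "map_poly to_ac x = map_poly to_ac m * map_poly to_ac (x div m) + map_poly to_ac r"
    by (metis rhomD(3,4)[OF rhom_map_poly[OF rhom_to_ac]])
  then have "map_poly to_ac r = map_poly to_ac x - map_poly to_ac m * map_poly to_ac (x div m)"
    by simp
  then have "map_poly to_ac m dvd map_poly to_ac r" using d by (simp add: dvd_diff)
  moreover have "map_poly to_ac r \<noteq> 0" using r0 by (simp add: map_poly_eq_0_iff)
  ultimately have "degree (map_poly to_ac m) \<le> degree (map_poly to_ac r)"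
    by (rule dvd_imp_degree_le)
  moreover have "degree (map_poly to_ac m) = degree m" by (rule map_poly_degree_eq) (use m0 in simp)
  moreover have "degree (map_poly to_ac r) = degree r" by (rule map_poly_degree_eq) (use r0 in simp)
  ultimately show False using dr by simp
qed

theorem lemma5p1:
  fixes m :: "('a::{finite,field}) poly" and d :: nat
    and f :: "'a poly" and \<alpha> :: "'a alg_closure" and n1 n2 :: nat
  assumes "monic_poly m" and "Factorial_Ring.irreducible m" and "degree m = d"
    and "in_Fp_poly f" and "monic_poly f" and "irreducible_Fp f"
    and "poly (map_poly to_ac f) \<alpha> = 0"
    and "n1 \<ge> 1" and "n2 \<ge> 1"
    and "n1 mod (card (UNIV :: 'a set) ^ d - 1) = n2 mod (card (UNIV :: 'a set) ^ d - 1)"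
  shows "m dvd (B_norm n1 \<alpha> - B_norm n2 \<alpha>)"
proof -
  have m0: "m \<noteq> 0" using assms(2) by auto
  have e: "n1 mod (card (UNIV :: 'a set) ^ degree m - 1) = n2 mod (card (UNIV :: 'a set) ^ degree m - 1)"
    using assms(3,10) by simp
  define E where "E = map_poly (\<lambda>c. c div m) (B_poly n1 - B_poly n2)"
  have dec: "B_poly n1 = B_poly n2 + [:m:] * E"
    unfolding E_def by (rule B_decomp[OF assms(2,8,9) e])
  define S where "S = conjugates_Fq \<alpha>"
  have S: "S = {\<beta>. poly (map_poly to_ac (min_poly_Fq \<alpha>)) \<beta> = 0}"
    by (simp add: S_def conjugates_Fq_def)
  obtain b1 where b1: "map_poly to_ac b1 = (\<Prod>\<beta>\<in>S. Ev \<beta> (B_poly n1))"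
    using norm_exists[where g="min_poly_Fq \<alpha>" and P="B_poly n1"] unfolding S by blast
  obtain b2 where b2: "map_poly to_ac b2 = (\<Prod>\<beta>\<in>S. Ev \<beta> (B_poly n2))"
    using norm_exists[where g="min_poly_Fq \<alpha>" and P="B_poly n2"] unfolding S by blast
  have n1: "B_norm n1 \<alpha> = b1" by (rule B_norm_eq) (simp add: b1 S_def B_eval_Ev)
  have n2: "B_norm n2 \<alpha> = b2" by (rule B_norm_eq) (simp add: b2 S_def B_eval_Ev)
  have "\<forall>\<beta>\<in>S. map_poly to_ac m dvd Ev \<beta> (B_poly n1) - Ev \<beta> (B_poly n2)"
  proof
    fix \<beta> assume "\<beta> \<in> S"
    have "Ev \<beta> (B_poly n1) = Ev \<beta> (B_poly n2) + Ev \<beta> [:m:] * Ev \<beta> E"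
      by (subst dec) (simp only: rhomD(3,4)[OF rhom_Ev])
    then show "map_poly to_ac m dvd Ev \<beta> (B_poly n1) - Ev \<beta> (B_poly n2)"
      by (simp add: Ev_const)
  qed
  then have "map_poly to_ac m dvd (\<Prod>\<beta>\<in>S. Ev \<beta> (B_poly n1)) - (\<Prod>\<beta>\<in>S. Ev \<beta> (B_poly n2))"
    by (rule prod_dvd_diff)
  then have "map_poly to_ac m dvd map_poly to_ac (b1 - b2)"
    by (simp add: rhom_diff[OF rhom_map_poly[OF rhom_to_ac]] b1 b2)
  then have "m dvd b1 - b2" by (rule descent[OF m0])
  then show ?thesis by (simp add: n1 n2)
qed

end
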